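(* Let $\theta\geq 0$ be real. If $p$ is a projector over $A(\mathbb{R}^2_\theta)$, i.e. $p\in M_n(A(\mathbb{R}^2_\theta))$ for some $n$ with $p^2=p=p^*$, then every entry of $p$ is a scalar multiple of the identity, i.e. $p$ is a projector in $M_n(\mathbb{C})$.
   Context: $A(\mathbb{R}^2_\theta)$ is the unital $*$-algebra generated by two self-adjoint elements $x,y$ with $[x,y]=xy-yx=-i\theta$; every element can be written uniquely as a finite sum $\sum a_{p,q}x^py^q$ with $a_{p,q}\in\mathbb{C}$ (ordered monomials linearly independent), and $\mathbb{C}$ is identified with the scalar multiples of $1$. *)

theory Defs
  imports Complex_Main
begin

text \<open>Concrete model of A(R^2_theta): an element sum a(p,q) x^p y^q is represented by
its coefficient function a :: nat => nat => complex (coefficient of the ordered monomial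
x^p y^q), required to be finitely supported.  Since [x,y] = -i theta, we have
y x = x y + i theta, and the normal-ordering rule
  y^q x^r = sum_k k! (q choose k) (r choose k) (i theta)^k x^(r-k) y^(q-k).\<close>

type_synonym elt = "nat \<Rightarrow> nat \<Rightarrow> complex"

definition supp :: "elt \<Rightarrow> (nat \<times> nat) set" where
  "supp a = {(p, q). a p q \<noteq> 0}"

definition is_elt :: "elt \<Rightarrow> bool" where
  "is_elt a \<longleftrightarrow> finite (supp a)"

definition scalar :: "complex \<Rightarrow> elt" where
  "scalar c = (\<lambda>p q. if p = 0 \<and> q = 0 then c else 0)"

definition reord_coef :: "real \<Rightarrow> nat \<Rightarrow> nat \<Rightarrow> nat \<Rightarrow> complex" where
  "reord_coef \<theta> q r k = of_nat (fact k * (q choose k) * (r choose k)) * (\<i> * of_real \<theta>) ^ k"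

text \<open>Product: (x^p y^q)(x^r y^s) = x^p (y^q x^r) y^s.\<close>
definition amul :: "real \<Rightarrow> elt \<Rightarrow> elt \<Rightarrow> elt" where
  "amul \<theta> a b = (\<lambda>m n.
     \<Sum>(p, q)\<in>supp a. \<Sum>(r, s)\<in>supp b. \<Sum>k\<le>min q r.
       if p + r - k = m \<and> q + s - k = n
       then a p q * b r s * reord_coef \<theta> q r k else 0)"

text \<open>Involution: (c x^p y^q)^* = conj(c) y^q x^p (x, y self-adjoint).\<close>
definition astar :: "real \<Rightarrow> elt \<Rightarrow> elt" where
  "astar \<theta> a = (\<lambda>m n.
     \<Sum>(p, q)\<in>supp a. \<Sum>k\<le>min q p.
       if p - k = m \<and> q - k = n then cnj (a p q) * reord_coef \<theta> q p k else 0)"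

definition is_projector :: "real \<Rightarrow> nat \<Rightarrow> (nat \<Rightarrow> nat \<Rightarrow> elt) \<Rightarrow> bool" where
  "is_projector \<theta> n P \<longleftrightarrow>
     (\<forall>i<n. \<forall>j<n. is_elt (P i j)) \<and>
     (\<forall>i<n. \<forall>j<n. (\<lambda>m k. \<Sum>l<n. amul \<theta> (P i l) (P l j) m k) = P i j) \<and>
     (\<forall>i<n. \<forall>j<n. astar \<theta> (P j i) = P i j)"

end

theory Submission
  imports Defs
begin

definition lexb :: "nat \<Rightarrow> nat \<Rightarrow> nat \<Rightarrow> nat \<Rightarrow> bool" where
  "lexb p q m1 m2 \<longleftrightarrow> p < m1 \<or> (p = m1 \<and> q \<le> m2)"

lemma reord0: "reord_coef \<theta> q r 0 = 1"
  by (simp add: reord_coef_def)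

lemma coef_astar:
  assumes fin: "is_elt a" and bd: "\<And>p q. a p q \<noteq> 0 \<Longrightarrow> lexb p q m1 m2"
  shows "astar \<theta> a m1 m2 = cnj (a m1 m2)"
proof -
  have fs: "finite (supp a)" using fin by (simp add: is_elt_def)
  have step: "(\<Sum>k\<le>min q p. if p - k = m1 \<and> q - k = m2 then cnj (a p q) * reord_coef \<theta> q p k else 0)
      = (if (p, q) = (m1, m2) then cnj (a m1 m2) else 0)" if "(p, q) \<in> supp a" for p q
  proof -
    have l: "lexb p q m1 m2" using that bd by (simp add: supp_def)
    have "(\<Sum>k\<le>min q p. if p - k = m1 \<and> q - k = m2 then cnj (a p q) * reord_coef \<theta> q p k else 0)
       = (\<Sum>k\<le>min q p. if k = 0 then (if (p, q) = (m1, m2) then cnj (a m1 m2) else 0) else 0)"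
      apply (rule sum.cong, simp)
      using l by (auto simp: lexb_def reord0)
    also have "\<dots> = (if (p, q) = (m1, m2) then cnj (a m1 m2) else 0)"
      by (simp add: sum.delta)
    finally show ?thesis .
  qed
  have "astar \<theta> a m1 m2 = (\<Sum>x\<in>supp a. if x = (m1, m2) then cnj (a m1 m2) else 0)"
    unfolding astar_def
    apply (rule sum.cong, simp)
    subgoal for x by (cases x) (simp add: step)
    done
  also have "\<dots> = cnj (a m1 m2)"
    using fs by (auto simp: sum.delta supp_def)
  finally show ?thesis .
qed

lemma coef_amul:
  assumes fa: "is_elt a" and fb: "is_elt b"
    and ba: "\<And>p q. a p q \<noteq> 0 \<Longrightarrow> lexb p q m1 m2"
    and bb: "\<And>p q. b p q \<noteq> 0 \<Longrightarrow> lexb p q m1 m2"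
  shows "amul \<theta> a b (2*m1) (2*m2) = a m1 m2 * b m1 m2"
proof -
  have fsa: "finite (supp a)" using fa by (simp add: is_elt_def)
  have fsb: "finite (supp b)" using fb by (simp add: is_elt_def)
  have step: "(\<Sum>k\<le>min q r. if p + r - k = 2*m1 \<and> q + s - k = 2*m2
       then a p q * b r s * reord_coef \<theta> q r k else 0)
      = (if (p, q) = (m1, m2) \<and> (r, s) = (m1, m2) then a m1 m2 * b m1 m2 else 0)"
    if "(p, q) \<in> supp a" "(r, s) \<in> supp b" for p q r s
  proof -
    have l1: "lexb p q m1 m2" using that ba by (simp add: supp_def)
    have l2: "lexb r s m1 m2" using that bb by (simp add: supp_def)
    have "(\<Sum>k\<le>min q r. if p + r - k = 2*m1 \<and> q + s - k = 2*m2
       then a p q * b r s * reord_coef \<theta> q r k else 0)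
      = (\<Sum>k\<le>min q r. if k = 0 then (if (p, q) = (m1, m2) \<and> (r, s) = (m1, m2) then a m1 m2 * b m1 m2 else 0) else 0)"
      apply (rule sum.cong, simp)
      using l1 l2 by (auto simp: lexb_def reord0)
    also have "\<dots> = (if (p, q) = (m1, m2) \<and> (r, s) = (m1, m2) then a m1 m2 * b m1 m2 else 0)"
      by (simp add: sum.delta)
    finally show ?thesis .
  qed
  have "amul \<theta> a b (2*m1) (2*m2) = (\<Sum>x\<in>supp a. \<Sum>y\<in>supp b.
      if x = (m1, m2) \<and> y = (m1, m2) then a m1 m2 * b m1 m2 else 0)"
    unfolding amul_def
    apply (rule sum.cong, simp)
    subgoal for x
    proof -
      assume xa: "x \<in> supp a"
      obtain p q where x: "x = (p, q)" by force
      have pa: "(p, q) \<in> supp a" using xa x by simp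
      show ?thesis unfolding x prod.case
        apply (rule sum.cong, simp)
        subgoal for y by (cases y) (simp only: prod.case step[OF pa])
        done
    qed
    done
  also have "\<dots> = (\<Sum>x\<in>supp a. if x = (m1, m2) then (\<Sum>y\<in>supp b.
      if y = (m1, m2) then a m1 m2 * b m1 m2 else 0) else 0)"
    by (rule sum.cong) auto
  also have "\<dots> = a m1 m2 * b m1 m2"
    using fsa fsb by (auto simp: sum.delta supp_def)
  finally show ?thesis .
qed

theorem theorem2p3:
  fixes \<theta> :: real and n :: nat and P :: "nat \<Rightarrow> nat \<Rightarrow> elt"
  assumes "\<theta> \<ge> 0"
    and "is_projector \<theta> n P"
  shows "\<forall>i<n. \<forall>j<n. \<exists>c. P i j = scalar c"
proof -
  have el: "\<And>i j. i < n \<Longrightarrow> j < n \<Longrightarrow> is_elt (P i j)"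
    and idem: "\<And>i j. i < n \<Longrightarrow> j < n \<Longrightarrow> (\<lambda>m k. \<Sum>l<n. amul \<theta> (P i l) (P l j) m k) = P i j"
    and sa: "\<And>i j. i < n \<Longrightarrow> j < n \<Longrightarrow> astar \<theta> (P j i) = P i j"
    using assms(2) unfolding is_projector_def by blast+
  define S where "S = (\<Union>i<n. \<Union>j<n. supp (P i j))"
  have finS: "finite S" unfolding S_def using el by (auto simp: is_elt_def)
  have inS: "\<And>i j p q. i < n \<Longrightarrow> j < n \<Longrightarrow> P i j p q \<noteq> 0 \<Longrightarrow> (p, q) \<in> S"
    unfolding S_def supp_def by blast
  show ?thesis
  proof (cases "\<forall>x\<in>S. x = (0, 0)")
    case True
    show ?thesis
    proof (intro allI impI)
      fix i j assume ij: "i < n" "j < n"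
      have "P i j = scalar (P i j 0 0)"
      proof (intro ext)
        fix p q
        show "P i j p q = scalar (P i j 0 0) p q"
        proof (cases "P i j p q = 0")
          case False
          then have "(p, q) = (0, 0)" using True inS[OF ij False] by blast
          then show ?thesis by (simp add: scalar_def)
        qed (auto simp: scalar_def)
      qed
      then show "\<exists>c. P i j = scalar c" by blast
    qed
  next
    case False
    then obtain x0 where "x0 \<in> S" "x0 \<noteq> (0, 0)" by blast
    then obtain p0 q0 where pq0: "(p0, q0) \<in> S" "(p0, q0) \<noteq> (0, 0)" by (cases x0) blast
    define M1 where "M1 = Max (fst ` S)"
    define T where "T = {x \<in> S. fst x = M1}"
    have M1in: "M1 \<in> fst ` S" unfolding M1_def using finS pq0 by (intro Max_in) auto
    have M1ge: "\<And>x. x \<in> S \<Longrightarrow> fst x \<le> M1" unfolding M1_def using finS by auto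
    have finT: "finite T" "T \<noteq> {}" unfolding T_def using finS M1in by auto
    define M2 where "M2 = Max (snd ` T)"
    have M2in: "M2 \<in> snd ` T" unfolding M2_def using finT by (intro Max_in) auto
    have M2ge: "\<And>x. x \<in> T \<Longrightarrow> snd x \<le> M2" unfolding M2_def using finT by auto
    have MS: "(M1, M2) \<in> S" using M2in unfolding T_def by auto
    have bound: "\<And>p q. (p, q) \<in> S \<Longrightarrow> lexb p q M1 M2"
    proof -
      fix p q assume "(p, q) \<in> S"
      then show "lexb p q M1 M2" using M1ge[of "(p,q)"] M2ge[of "(p,q)"]
        unfolding lexb_def T_def by force
    qed
    have Mnz: "(M1, M2) \<noteq> (0, 0)"
    proof
      assume z: "(M1, M2) = (0, 0)"
      have "lexb p0 q0 M1 M2" using bound pq0(1) by blast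
      then show False using z pq0(2) by (auto simp: lexb_def)
    qed
    obtain l0 i where li: "l0 < n" "i < n" "P l0 i M1 M2 \<noteq> 0"
      using MS unfolding S_def supp_def by blast
    have bd: "\<And>a b p q. a < n \<Longrightarrow> b < n \<Longrightarrow> P a b p q \<noteq> 0 \<Longrightarrow> lexb p q M1 M2"
      using bound inS by blast
    have "P i i (2*M1) (2*M2) = (\<Sum>l<n. amul \<theta> (P i l) (P l i) (2*M1) (2*M2))"
      using fun_cong[OF fun_cong[OF idem[OF li(2) li(2)]], of "2*M1" "2*M2"] by simp
    also have "\<dots> = (\<Sum>l<n. P i l M1 M2 * P l i M1 M2)"
    proof (rule sum.cong)
      fix l assume l: "l \<in> {..<n}"
      then have l': "l < n" by simp
      show "amul \<theta> (P i l) (P l i) (2*M1) (2*M2) = P i l M1 M2 * P l i M1 M2"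
        by (rule coef_amul[OF el[OF li(2) l'] el[OF l' li(2)]])
           (rule bd[OF li(2) l'], assumption, rule bd[OF l' li(2)], assumption)
    qed simp
    also have "\<dots> = (\<Sum>l<n. cnj (P l i M1 M2) * P l i M1 M2)"
    proof (rule sum.cong)
      fix l assume l: "l \<in> {..<n}"
      have "P i l M1 M2 = astar \<theta> (P l i) M1 M2" using sa[of i l] l li by simp
      also have "\<dots> = cnj (P l i M1 M2)"
        using l li by (intro coef_astar[OF el] bd[of l i]) auto
      finally show "P i l M1 M2 * P l i M1 M2 = cnj (P l i M1 M2) * P l i M1 M2" by simp
    qed simp
    also have "\<dots> = of_real (\<Sum>l<n. (cmod (P l i M1 M2))^2)"
      unfolding of_real_sum by (rule sum.cong) (simp_all add: mult.commute[of "cnj _"] complex_norm_square[symmetric])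
    finally have eq: "P i i (2*M1) (2*M2) = of_real (\<Sum>l<n. (cmod (P l i M1 M2))^2)" .
    have "(\<Sum>l<n. (cmod (P l i M1 M2))^2) > 0"
    proof (rule sum_pos2[of "{..<n}" l0])
      show "(cmod (P l0 i M1 M2))^2 > 0" using li by simp
    qed (use li in auto)
    then have "P i i (2*M1) (2*M2) \<noteq> 0" unfolding eq of_real_eq_0_iff by linarith
    then have "lexb (2*M1) (2*M2) M1 M2" using bd li by blast
    then show ?thesis using Mnz by (auto simp: lexb_def)
  qed
qed

end
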